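(* Let $(X,T)$ be a minimal topological dynamical system. If the factor map $\pi: X\to X_D$ onto its maximal distal factor is proximal, then $(X,T)$ is not strongly $\mathcal{F}_t$-sensitive.
   Context: A topological dynamical system: compact metric space $(X,d)$ with continuous surjection $T$; minimal means every orbit is dense. A pair is proximal if $\inf_n d(T^nx,T^ny)=0$, otherwise distal; a system is distal if all pairs of distinct points are distal; $X_D$ is the distal factor of which every distal factor of $(X,T)$ is a factor. $\pi$ is proximal if every pair in a common fiber is proximal. $(X,T)$ is strongly $\mathcal{F}_t$-sensitive if there is $\delta>0$ such that for each nonempty open $U$ there are $x,y\in U$ with $\{n\in\mathbb{Z}_+:d(T^nx,T^ny)>\delta\}$ thick (containing arbitrarily long blocks of consecutive integers). *)

theory Defs
  imports "HOL-Analysis.Analysis"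
begin

definition tds :: "'a::metric_space set \<Rightarrow> ('a \<Rightarrow> 'a) \<Rightarrow> bool" where
  "tds X T \<longleftrightarrow> compact X \<and> X \<noteq> {} \<and> continuous_on X T \<and> T ` X = X"

definition minimal :: "'a::metric_space set \<Rightarrow> ('a \<Rightarrow> 'a) \<Rightarrow> bool" where
  "minimal X T \<longleftrightarrow> (\<forall>x\<in>X. X \<subseteq> closure {(T ^^ n) x | n. True})"

definition proximal_pair :: "('a::metric_space \<Rightarrow> 'a) \<Rightarrow> 'a \<Rightarrow> 'a \<Rightarrow> bool" where
  "proximal_pair T x y \<longleftrightarrow> (INF n. dist ((T ^^ n) x) ((T ^^ n) y)) = 0"

definition distal :: "'a::metric_space set \<Rightarrow> ('a \<Rightarrow> 'a) \<Rightarrow> bool" where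
  "distal X T \<longleftrightarrow> (\<forall>x\<in>X. \<forall>y\<in>X. x \<noteq> y \<longrightarrow> \<not> proximal_pair T x y)"

definition factor_map ::
  "'a::metric_space set \<Rightarrow> ('a \<Rightarrow> 'a) \<Rightarrow> 'b::metric_space set \<Rightarrow> ('b \<Rightarrow> 'b) \<Rightarrow> ('a \<Rightarrow> 'b) \<Rightarrow> bool" where
  "factor_map X T Y S p \<longleftrightarrow> tds X T \<and> tds Y S \<and> continuous_on X p \<and> p ` X = Y \<and>
     (\<forall>x\<in>X. p (T x) = S (p x))"

definition max_distal_factor ::
  "'a::metric_space set \<Rightarrow> ('a \<Rightarrow> 'a) \<Rightarrow> 'b::metric_space set \<Rightarrow> ('b \<Rightarrow> 'b) \<Rightarrow> ('a \<Rightarrow> 'b) \<Rightarrow> bool" where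
  "max_distal_factor X T Y S p \<longleftrightarrow> factor_map X T Y S p \<and> distal Y S \<and>
     (\<forall>(Z::'b set) R rho. factor_map X T Z R rho \<and> distal Z R \<longrightarrow>
        (\<exists>phi. factor_map Y S Z R phi \<and> (\<forall>x\<in>X. rho x = phi (p x))))"

definition proximal_factor :: "'a::metric_space set \<Rightarrow> ('a \<Rightarrow> 'a) \<Rightarrow> ('a \<Rightarrow> 'b) \<Rightarrow> bool" where
  "proximal_factor X T p \<longleftrightarrow> (\<forall>x\<in>X. \<forall>y\<in>X. p x = p y \<longrightarrow> proximal_pair T x y)"

definition thick :: "nat set \<Rightarrow> bool" where
  "thick A \<longleftrightarrow> (\<forall>L. \<exists>m. {m..<m+L} \<subseteq> A)"

definition strongly_Ft_sensitive :: "'a::metric_space set \<Rightarrow> ('a \<Rightarrow> 'a) \<Rightarrow> bool" where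
  "strongly_Ft_sensitive X T \<longleftrightarrow> (\<exists>\<delta>>0. \<forall>U. openin (top_of_set X) U \<and> U \<noteq> {} \<longrightarrow>
     (\<exists>x\<in>U. \<exists>y\<in>U. thick {n. dist ((T ^^ n) x) ((T ^^ n) y) > \<delta>}))"

end

theory Submission
  imports Defs
begin


lemma compact_imp_closed_fun:
  fixes A :: "('a \<Rightarrow> 'b::metric_space) set"
  assumes "compact A" shows "closed A"
proof -
  have H: "Hausdorff_space (product_topology (\<lambda>_::'a. (euclidean::'b topology)) UNIV)"
    by (metis Hausdorff_space_euclidean Hausdorff_space_product_topology)
  have "compactin euclidean A" using assms by simp
  then have "closedin euclidean A"
    using compactin_imp_closedin[OF H] by (simp add: euclidean_product_topology)
  then show ?thesis by simp
qed

lemma compact_Pi_UNIV: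
  assumes "compact (Y::'b::topological_space set)"
  shows "compact {f::'a\<Rightarrow>'b. \<forall>y. f y \<in> Y}"
proof -
  have eq: "{f::'a\<Rightarrow>'b. \<forall>y. f y \<in> Y} = PiE UNIV (\<lambda>_. Y)"
    by (auto simp: PiE_def Pi_def)
  have "compactin (product_topology (\<lambda>_. euclidean) UNIV) (PiE (UNIV::'a set) (\<lambda>_. Y))"
    using assms by (simp add: compactin_PiE)
  then show ?thesis unfolding eq euclidean_product_topology by simp
qed

lemma cont_right_mult: "continuous_on UNIV (\<lambda>f::'a\<Rightarrow>'b::topological_space. f \<circ> q)"
  by (intro continuous_on_coordinatewise_then_product) (simp add: o_def)




lemma closed_fix_right:
  "closed {f::'b::metric_space \<Rightarrow> 'b. f \<circ> p = p}"
proof -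
  have "{f::'b \<Rightarrow> 'b. f \<circ> p = p} = (\<Inter>y. {f. f (p y) = p y})"
    by (auto simp: fun_eq_iff)
  moreover have "closed {f::'b \<Rightarrow> 'b. f (p y) = p y}" for y
    by (intro closed_Collect_eq) (auto intro: continuous_on_const)
  ultimately show ?thesis by auto
qed

lemma ellis:
  fixes A :: "('b::metric_space \<Rightarrow> 'b) set"
  assumes A: "compact A" "A \<noteq> {}" "\<forall>p\<in>A. \<forall>q\<in>A. p \<circ> q \<in> A"
  shows "\<exists>u\<in>A. u \<circ> u = u"
proof -
  define F where "F = {B. B \<subseteq> A \<and> B \<noteq> {} \<and> compact B \<and> (\<forall>p\<in>B. \<forall>q\<in>B. p \<circ> q \<in> B)}"
  define G where "G = uminus ` F"
  have AF: "A \<in> F" using A by (auto simp: F_def)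
  have "\<exists>M\<in>G. \<forall>X\<in>G. M \<subseteq> X \<longrightarrow> X = M"
  proof (rule subset_Zorn_nonempty)
    show "G \<noteq> {}" using AF by (auto simp: G_def)
  next
    fix C assume Cne: "C \<noteq> {}" and ch: "subset.chain G C"
    define D where "D = uminus ` C"
    have CG: "C \<subseteq> G" and Cch: "\<forall>X\<in>C. \<forall>Y\<in>C. X \<subseteq> Y \<or> Y \<subseteq> X"
      using ch unfolding subset_chain_def by auto
    have CD: "C = uminus ` D" unfolding D_def by (simp add: image_image)
    have DF: "D \<subseteq> F"
    proof
      fix x assume "x \<in> D"
      then obtain c where c: "c \<in> C" "x = - c" unfolding D_def by auto
      then obtain f where "f \<in> F" "c = - f" using CG unfolding G_def by auto
      then show "x \<in> F" using c by simp
    qed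
    have Dch: "\<forall>X\<in>D. \<forall>Y\<in>D. X \<subseteq> Y \<or> Y \<subseteq> X"
    proof (intro ballI)
      fix X Y assume "X \<in> D" "Y \<in> D"
      then obtain a b where "a \<in> C" "b \<in> C" "X = -a" "Y = -b" unfolding D_def by auto
      then show "X \<subseteq> Y \<or> Y \<subseteq> X" using Cch by (metis Compl_anti_mono)
    qed
    have Dne: "D \<noteq> {}" using Cne unfolding D_def by simp
    have clD: "closed (\<Inter>D)"
      using DF by (intro closed_Inter) (auto simp: F_def intro: compact_imp_closed_fun)
    obtain d where d: "d \<in> D" using Dne by auto
    have cD: "compact (\<Inter>D)"
    proof -
      have "d \<inter> \<Inter>D = \<Inter>D" using d by auto
      moreover have "compact (d \<inter> \<Inter>D)" using d DF clD by (intro compact_Int_closed) (auto simp: F_def)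
      ultimately show ?thesis by simp
    qed
    have subA: "\<Inter>D \<subseteq> A"
    proof
      fix x assume "x \<in> \<Inter>D"
      then have "x \<in> d" using d by (rule InterD)
      moreover have "d \<in> F" using d DF by blast
      then have "d \<subseteq> A" by (simp add: F_def)
      ultimately show "x \<in> A" by auto
    qed
    have neD: "\<Inter>D \<noteq> {}"
    proof -
      have "A \<inter> \<Inter>D \<noteq> {}"
      proof (rule compact_imp_fip[OF A(1)])
        show "closed T" if "T \<in> D" for T
          using that DF by (auto simp: F_def intro: compact_imp_closed_fun)
      next
        fix F' assume fin: "finite F'" and sub: "F' \<subseteq> D"
        show "A \<inter> \<Inter>F' \<noteq> {}"
        proof (cases "F' = {}")
          case True then show ?thesis using A by simp
        next
          case False
          have "subset.chain F F'"
            unfolding subset_chain_def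
          proof (intro conjI)
            show "F' \<subseteq> F" using sub DF by (rule subset_trans)
            show "\<forall>X\<in>F'. \<forall>Y\<in>F'. X \<subseteq> Y \<or> Y \<subseteq> X" using sub Dch by blast
          qed
          then have "\<Inter>F' \<in> F'" using Inter_in_chain fin False by blast
          then have "\<Inter>F' \<in> F" using sub DF by (meson subsetD)
          then have "\<Inter>F' \<subseteq> A" "\<Inter>F' \<noteq> {}" by (simp_all add: F_def)
          then show ?thesis by (simp add: Int_absorb1)
        qed
      qed
      then show ?thesis by auto
    qed
    have smD: "\<forall>p\<in>\<Inter>D. \<forall>q\<in>\<Inter>D. p \<circ> q \<in> \<Inter>D"
    proof (intro ballI InterI)
      fix p q X assume "p \<in> \<Inter>D" "q \<in> \<Inter>D" "X \<in> D"
      then have "p \<in> X" "q \<in> X" "X \<in> F" using DF by auto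
      then show "p \<circ> q \<in> X" by (simp add: F_def)
    qed
    have "\<Inter>D \<in> F" unfolding F_def using cD subA neD smD by (intro CollectI conjI)
    moreover have "\<Union>C = - \<Inter>D" unfolding CD by (rule uminus_Inf[symmetric])
    ultimately show "\<Union>C \<in> G" unfolding G_def by (simp add: image_eqI)
  qed
  then obtain M where "M \<in> G" and Mmin: "\<forall>X\<in>G. M \<subseteq> X \<longrightarrow> X = M" by blast
  define B where "B = - M"
  have BF: "B \<in> F" using \<open>M \<in> G\<close> unfolding B_def G_def by auto
  have Bmin: "\<And>B'. B' \<in> F \<Longrightarrow> B' \<subseteq> B \<Longrightarrow> B' = B"
  proof -
    fix B' assume "B' \<in> F" "B' \<subseteq> B"
    then have "-B' \<in> G" "M \<subseteq> -B'" unfolding G_def B_def by auto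
    then have "-B' = M" using Mmin by blast
    then show "B' = B" unfolding B_def by auto
  qed
  obtain p where p: "p \<in> B" using BF by (auto simp: F_def)
  have Bsg: "\<forall>x\<in>B. \<forall>y\<in>B. x \<circ> y \<in> B" "compact B" "B \<subseteq> A" using BF by (auto simp: F_def)
  define Bp where "Bp = (\<lambda>b. b \<circ> p) ` B"
  have "Bp \<in> F"
  proof -
    have "compact Bp" unfolding Bp_def
      using Bsg(2) by (intro compact_continuous_image continuous_on_subset[OF cont_right_mult]) auto
    moreover have "Bp \<subseteq> B" using Bsg p unfolding Bp_def by auto
    moreover have "\<forall>x\<in>Bp. \<forall>y\<in>Bp. x \<circ> y \<in> Bp"
    proof (intro ballI)
      fix x y assume "x \<in> Bp" "y \<in> Bp"
      then obtain b b' where "b \<in> B" "b' \<in> B" "x = b \<circ> p" "y = b' \<circ> p" unfolding Bp_def by auto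
      then have "x \<circ> y = (b \<circ> (p \<circ> b')) \<circ> p" by (simp add: o_assoc)
      moreover have "b \<circ> (p \<circ> b') \<in> B" using Bsg \<open>b \<in> B\<close> \<open>b' \<in> B\<close> p by auto
      ultimately show "x \<circ> y \<in> Bp" unfolding Bp_def by auto
    qed
    moreover have "Bp \<noteq> {}" using p unfolding Bp_def by auto
    moreover have "B \<subseteq> A" using Bsg by simp
    ultimately show ?thesis unfolding F_def by blast
  qed
  moreover have "Bp \<subseteq> B" using Bsg p unfolding Bp_def by auto
  ultimately have "Bp = B" using Bmin by blast
  define C where "C = B \<inter> {f. f \<circ> p = p}"
  have "C \<in> F"
  proof -
    have "compact C" unfolding C_def using Bsg(2) closed_fix_right by (rule compact_Int_closed)
    moreover have "C \<noteq> {}"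
    proof -
      have "p \<in> (\<lambda>b. b \<circ> p) ` B" using \<open>Bp = B\<close> p unfolding Bp_def by simp
      then obtain b where "b \<in> B" "b \<circ> p = p" by auto
      then show ?thesis unfolding C_def by auto
    qed
    moreover have "\<forall>x\<in>C. \<forall>y\<in>C. x \<circ> y \<in> C"
    proof (intro ballI)
      fix x y assume "x \<in> C" "y \<in> C"
      then have "x \<in> B" "y \<in> B" "x \<circ> p = p" "y \<circ> p = p" unfolding C_def by auto
      then have "x \<circ> y \<in> B" "(x \<circ> y) \<circ> p = p" using Bsg by (auto simp: comp_assoc)
      then show "x \<circ> y \<in> C" unfolding C_def by auto
    qed
    moreover have "C \<subseteq> A" using Bsg unfolding C_def by auto
    ultimately show ?thesis unfolding F_def by blast
  qed
  then have "C = B" using Bmin unfolding C_def by blast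
  then have "p \<circ> p = p" using p unfolding C_def by auto
  then show ?thesis using p Bsg by blast
qed




locale env =
  fixes Y :: "'b::metric_space set" and S :: "'b \<Rightarrow> 'b" and y0 :: 'b
  assumes compY: "compact Y" and y0: "y0 \<in> Y" and contS: "continuous_on Y S" and SY: "S ` Y \<subseteq> Y"
begin

definition Sh where "Sh y = (if y \<in> Y then S y else y0)"
definition K where "K = {f. \<forall>y. f y \<in> Y}"
definition E where "E = closure (range (\<lambda>n. Sh ^^ Suc n))"

lemma Sh_in: "Sh y \<in> Y" using SY y0 by (auto simp: Sh_def)

lemma Shn_in: "y \<in> Y \<Longrightarrow> (Sh^^n) y \<in> Y"
  by (induction n) (auto simp: Sh_in)

lemma Sn_in: "y \<in> Y \<Longrightarrow> (S^^n) y \<in> Y"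
  by (induction n) (use SY in auto)

lemma Shn_eq: "y \<in> Y \<Longrightarrow> (Sh^^n) y = (S^^n) y"
  by (induction n) (auto simp: Sh_def Sn_in)

lemma cont_Sh: "continuous_on Y Sh"
  by (rule continuous_on_eq[OF contS]) (simp add: Sh_def)

lemma cont_Shn: "continuous_on Y (Sh^^n)"
proof (induction n)
  case 0 then show ?case by (simp add: continuous_on_id)
next
  case (Suc n)
  have "continuous_on Y (\<lambda>x. Sh ((Sh^^n) x))"
    by (rule continuous_on_compose2[OF cont_Sh Suc]) (auto simp: Shn_in)
  then show ?case by (simp add: o_def)
qed

lemma compK: "compact K" unfolding K_def using compY by (rule compact_Pi_UNIV)

lemma closedK: "closed K" using compK by (rule compact_imp_closed_fun)

lemma Shn_K: "Sh^^Suc n \<in> K" by (simp add: K_def Sh_in)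

lemma E_K: "E \<subseteq> K"
  unfolding E_def by (rule closure_minimal) (auto simp: closedK Shn_K simp del: funpow.simps)

lemma closedE: "closed E" unfolding E_def by simp

lemma compE: "compact E"
proof -
  have "compact (K \<inter> E)" using compK closedE by (rule compact_Int_closed)
  moreover have "K \<inter> E = E" using E_K by auto
  ultimately show ?thesis by simp
qed

lemma cont_left: "continuous_on K (\<lambda>f. (Sh^^n) \<circ> f)"
proof (intro continuous_on_coordinatewise_then_product)
  fix i
  have "continuous_on K (\<lambda>f. (Sh^^n) (f i))"
    by (rule continuous_on_compose2[OF cont_Shn continuous_on_subset[OF continuous_on_product_coordinates]])
      (auto simp: K_def)
  then show "continuous_on K (\<lambda>f. ((Sh^^n) \<circ> f) i)" by (simp add: o_def)
qed

lemma SucE: "Sh^^Suc m \<in> E"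
proof -
  have "Sh^^Suc m \<in> range (\<lambda>m. Sh ^^ Suc m)" by (rule rangeI)
  then show ?thesis unfolding E_def by (rule closure_subset[THEN subsetD])
qed

lemma E_left: assumes "q \<in> E" shows "(Sh^^n) \<circ> q \<in> E"
proof -
  have "(\<lambda>f. (Sh^^n) \<circ> f) ` closure (range (\<lambda>m. Sh ^^ Suc m)) \<subseteq> E"
  proof (rule image_closure_subset)
    show "continuous_on (closure (range (\<lambda>m. Sh ^^ Suc m))) (\<lambda>f. (Sh^^n) \<circ> f)"
      using continuous_on_subset[OF cont_left E_K] unfolding E_def .
    show "closed E" by (rule closedE)
    show "(\<lambda>f. (Sh^^n) \<circ> f) ` range (\<lambda>m. Sh ^^ Suc m) \<subseteq> E"
    proof (rule image_subsetI)
      fix f assume "f \<in> range (\<lambda>m. Sh ^^ Suc m)"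
      then obtain m where fm: "f = Sh ^^ Suc m" by (rule rangeE)
      have "Sh^^Suc (n + m) = Sh^^(n + Suc m)" by (simp only: add_Suc_right)
      also have "\<dots> = (Sh^^n) \<circ> (Sh^^Suc m)" by (rule funpow_add)
      finally have eq: "(Sh^^n) \<circ> f = Sh^^Suc (n + m)" unfolding fm by (rule sym)
      show "(Sh^^n) \<circ> f \<in> E" unfolding eq by (rule SucE)
    qed
  qed
  moreover have "(Sh^^n) \<circ> q \<in> (\<lambda>f. (Sh^^n) \<circ> f) ` closure (range (\<lambda>m. Sh ^^ Suc m))"
    using assms unfolding E_def by (rule imageI)
  ultimately show ?thesis by (rule subsetD)
qed

lemma E_comp: assumes "p \<in> E" "q \<in> E" shows "p \<circ> q \<in> E"
proof -
  have "(\<lambda>f. f \<circ> q) ` closure (range (\<lambda>m. Sh ^^ Suc m)) \<subseteq> E"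
  proof (rule image_closure_subset)
    show "continuous_on (closure (range (\<lambda>m. Sh ^^ Suc m))) (\<lambda>f. f \<circ> q)"
      by (rule continuous_on_subset[OF cont_right_mult subset_UNIV])
    show "closed E" by (rule closedE)
    show "(\<lambda>f. f \<circ> q) ` range (\<lambda>m. Sh ^^ Suc m) \<subseteq> E"
    proof (rule image_subsetI)
      fix f assume "f \<in> range (\<lambda>m. Sh ^^ Suc m)"
      then obtain m where fm: "f = Sh ^^ Suc m" by (rule rangeE)
      show "f \<circ> q \<in> E" unfolding fm by (rule E_left[OF assms(2)])
    qed
  qed
  moreover have "p \<circ> q \<in> (\<lambda>f. f \<circ> q) ` closure (range (\<lambda>m. Sh ^^ Suc m))"
    using assms(1) unfolding E_def by (rule imageI)
  ultimately show ?thesis by (rule subsetD)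
qed

lemma E_prox:
  assumes u: "u \<in> E" "u \<circ> u = u" and a: "a \<in> Y"
  shows "proximal_pair S a (u a)"
proof -
  define ua where "ua = u a"
  have uaY: "ua \<in> Y" using u E_K unfolding ua_def K_def by auto
  have uua: "u ua = ua" using u(2) unfolding ua_def by (metis comp_apply)
  have ex: "\<exists>n. dist ((S^^n) a) ((S^^n) ua) < e" if e: "e > 0" for e
  proof -
    define Ob where "Ob = (\<lambda>f. f a) -` ball ua (e/2) \<inter> (\<lambda>f::'b\<Rightarrow>'b. f ua) -` ball ua (e/2)"
    have "open Ob" unfolding Ob_def
      by (intro open_Int open_vimage continuous_on_product_coordinates open_ball)
    moreover have "u \<in> Ob" unfolding Ob_def using e uua by (simp add: ua_def)
    moreover have "u \<in> closure (range (\<lambda>m. Sh ^^ Suc m))" using u E_def by simp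
    ultimately have "range (\<lambda>m. Sh ^^ Suc m) \<inter> Ob \<noteq> {}"
      using closure_iff_nhds_not_empty by blast
    then obtain m where m: "Sh ^^ Suc m \<in> Ob" by auto
    then have "dist ((S^^Suc m) a) ua < e/2" "dist ((S^^Suc m) ua) ua < e/2"
      unfolding Ob_def using Shn_eq[OF a] Shn_eq[OF uaY] by (auto simp: dist_commute simp del: funpow.simps)
    then have "dist ((S^^Suc m) a) ((S^^Suc m) ua) < e"
      using dist_triangle2[of "(S^^Suc m) a" "(S^^Suc m) ua" ua] by linarith
    then show ?thesis by blast
  qed
  have bdd: "bdd_below (range (\<lambda>n. dist ((S^^n) a) ((S^^n) ua)))"
    by (rule bdd_belowI[of _ 0]) auto
  have ge: "(INF n. dist ((S^^n) a) ((S^^n) ua)) \<ge> 0"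
    by (rule cINF_greatest) auto
  have "\<not> (INF n. dist ((S^^n) a) ((S^^n) ua)) > 0"
  proof
    assume pos: "(INF n. dist ((S^^n) a) ((S^^n) ua)) > 0"
    then obtain n where "dist ((S^^n) a) ((S^^n) ua) < (INF n. dist ((S^^n) a) ((S^^n) ua))"
      using ex by blast
    moreover have "(INF n. dist ((S^^n) a) ((S^^n) ua)) \<le> dist ((S^^n) a) ((S^^n) ua)"
      by (rule cINF_lower[OF bdd]) simp
    ultimately show False by linarith
  qed
  then have "(INF n. dist ((S^^n) a) ((S^^n) ua)) = 0" using ge by linarith
  then show ?thesis unfolding proximal_pair_def ua_def .
qed

lemma E_fix:
  assumes d: "distal Y S" and u: "u \<in> E" "u \<circ> u = u" and a: "a \<in> Y"
  shows "u a = a"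
proof (rule ccontr)
  assume "u a \<noteq> a"
  moreover have "u a \<in> Y" using u E_K unfolding K_def by auto
  ultimately have "\<not> proximal_pair S a (u a)" using d a unfolding distal_def by metis
  then show False using E_prox[OF u a] by simp
qed


lemma semisimple_pairs:
  assumes d: "distal Y S" and a: "a \<in> Y" and b: "b \<in> Y"
    and cd: "(c, d) \<in> closure {((S^^n) a, (S^^n) b) | n. True}"
  shows "(a, b) \<in> closure {((S^^n) c, (S^^n) d) | n. True}"
proof -
  define ev where "ev = (\<lambda>f::'b\<Rightarrow>'b. (f a, f b))"
  have cev: "continuous_on UNIV ev" unfolding ev_def
    by (intro continuous_on_Pair continuous_on_product_coordinates)
  have sub: "{((S^^n) a, (S^^n) b) | n. True} \<subseteq> insert (a, b) (ev ` E)"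
  proof (rule subsetI)
    fix z assume "z \<in> {((S^^n) a, (S^^n) b) | n. True}"
    then obtain n where zn: "z = ((S^^n) a, (S^^n) b)" by auto
    have "((S^^n) a, (S^^n) b) \<in> insert (a, b) (ev ` E)"
    proof (cases n)
      case 0 then show ?thesis by simp
    next
      case (Suc m)
      have "Sh^^Suc m \<in> E" unfolding E_def by (rule closure_subset[THEN subsetD]) simp
      moreover have "ev (Sh^^Suc m) = ((S^^n) a, (S^^n) b)"
        unfolding ev_def Suc using Shn_eq[OF a] Shn_eq[OF b] by (simp del: funpow.simps)
      ultimately show ?thesis by (metis image_eqI insertI2)
    qed
    then show "z \<in> insert (a, b) (ev ` E)" using zn by simp
  qed
  have "compact (ev ` E)"
    by (rule compact_continuous_image[OF continuous_on_subset[OF cev subset_UNIV] compE])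
  then have "compact (insert (a, b) (ev ` E))" by (rule compact_insert)
  then have "closed (insert (a, b) (ev ` E))" by (rule compact_imp_closed)
  then have "closure {((S^^n) a, (S^^n) b) | n. True} \<subseteq> insert (a, b) (ev ` E)"
    using sub by (rule closure_minimal[rotated])
  then have cdin: "(c, d) \<in> insert (a, b) (ev ` E)" using cd by auto
  show ?thesis
  proof (cases "(c, d) = (a, b)")
    case True
    have "(a, b) = ((S^^0) c, (S^^0) d)" using True by simp
    then have "(a, b) \<in> {((S^^n) c, (S^^n) d) | n. True}" by blast
    then show ?thesis by (rule closure_subset[THEN subsetD])
  next
    case False
    have "(c, d) \<in> ev ` E" using cdin False by (meson insertE)
    then obtain q where q0: "q \<in> E" "(c, d) = ev q" by (rule imageE)
    then have q: "q \<in> E" "c = q a" "d = q b" unfolding ev_def by auto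
    have cY: "c \<in> Y" "d \<in> Y" using q E_K unfolding K_def by auto
    define A where "A = (\<lambda>r. r \<circ> q) ` E"
    have "compact A" unfolding A_def
      by (rule compact_continuous_image[OF continuous_on_subset[OF cont_right_mult subset_UNIV] compE])
    moreover have "A \<noteq> {}" using q unfolding A_def by auto
    moreover have "\<forall>x\<in>A. \<forall>y\<in>A. x \<circ> y \<in> A"
    proof (intro ballI)
      fix x y assume "x \<in> A" "y \<in> A"
      then obtain r r' where "r \<in> E" "r' \<in> E" "x = r \<circ> q" "y = r' \<circ> q" unfolding A_def by auto
      then have "x \<circ> y = (r \<circ> (q \<circ> r')) \<circ> q" by (simp add: o_assoc)
      moreover have "r \<circ> (q \<circ> r') \<in> E" using E_comp \<open>r \<in> E\<close> \<open>r' \<in> E\<close> q by auto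
      ultimately show "x \<circ> y \<in> A" unfolding A_def by auto
    qed
    ultimately have "\<exists>u\<in>A. u \<circ> u = u" by (rule ellis)
    then obtain u where u: "u \<in> A" "u \<circ> u = u" by blast
    then obtain r where r: "r \<in> E" "u = r \<circ> q" unfolding A_def by auto
    have uE: "u \<in> E" using r q E_comp by auto
    have "u a = a" "u b = b" using E_fix[OF d uE u(2)] a b by auto
    then have rab: "r c = a" "r d = b" using r q by auto
    define ev' where "ev' = (\<lambda>f::'b\<Rightarrow>'b. (f c, f d))"
    have "ev' ` closure (range (\<lambda>m. Sh ^^ Suc m)) \<subseteq> closure {((S^^n) c, (S^^n) d) | n. True}"
    proof (rule image_closure_subset)
      have "continuous_on UNIV ev'" unfolding ev'_def
        by (intro continuous_on_Pair continuous_on_product_coordinates)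
      then show "continuous_on (closure (range (\<lambda>m. Sh ^^ Suc m))) ev'"
        by (rule continuous_on_subset) simp
      show "closed (closure {((S^^n) c, (S^^n) d) | n. True})" by simp
      show "ev' ` range (\<lambda>m. Sh ^^ Suc m) \<subseteq> closure {((S^^n) c, (S^^n) d) | n. True}"
      proof (rule image_subsetI)
        fix f assume "f \<in> range (\<lambda>m. Sh ^^ Suc m)"
        then obtain m where "f = Sh ^^ Suc m" by auto
        then have "ev' f = ((S^^Suc m) c, (S^^Suc m) d)"
          unfolding ev'_def using Shn_eq[OF cY(1)] Shn_eq[OF cY(2)] by (simp del: funpow.simps)
        then have "ev' f \<in> {((S^^n) c, (S^^n) d) | n. True}" by blast
        then show "ev' f \<in> closure {((S^^n) c, (S^^n) d) | n. True}" by (rule closure_subset[THEN subsetD])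
      qed
    qed
    moreover have "ev' r \<in> ev' ` closure (range (\<lambda>m. Sh ^^ Suc m))"
      using r(1) unfolding E_def by (rule imageI)
    ultimately have "ev' r \<in> closure {((S^^n) c, (S^^n) d) | n. True}" by (rule subsetD)
    then show ?thesis unfolding ev'_def rab .
  qed
qed
end




lemma funpow_in: assumes "T ` X \<subseteq> X" "x \<in> X" shows "(T^^n) x \<in> X"
  using assms by (induction n) auto

lemma cont_funpow: assumes "continuous_on X T" "T ` X \<subseteq> X" shows "continuous_on X (T^^n)"
proof (induction n)
  case 0 then show ?case by (simp add: continuous_on_id)
next
  case (Suc n)
  have "continuous_on X (\<lambda>x. T ((T^^n) x))"
    by (rule continuous_on_compose2[OF assms(1) Suc]) (use funpow_in[OF assms(2)] in blast)
  then show ?case by (simp add: o_def)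
qed

lemma seq_pair:
  fixes X :: "'a::metric_space set" and a b :: "nat \<Rightarrow> 'a"
  assumes "compact X" "\<And>j. a j \<in> X" "\<And>j. b j \<in> X"
  shows "\<exists>a0\<in>X. \<exists>b0\<in>X. \<exists>r. strict_mono r \<and> (a \<circ> r) \<longlonglongrightarrow> a0 \<and> (b \<circ> r) \<longlonglongrightarrow> b0"
proof -
  have "compact (X \<times> X)" using assms(1) assms(1) by (rule compact_Times)
  then have "seq_compact (X \<times> X)" by (rule compact_imp_seq_compact)
  moreover have "\<forall>j. (a j, b j) \<in> X \<times> X" using assms by auto
  ultimately obtain l r where l: "l \<in> X \<times> X" and r: "strict_mono r"
    and lim: "((\<lambda>j. (a j, b j)) \<circ> r) \<longlonglongrightarrow> l"
    by (rule seq_compactE[where f="\<lambda>j. (a j, b j)"])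
  obtain l1 l2 where l12: "l = (l1, l2)" by (cases l)
  have "(a \<circ> r) \<longlonglongrightarrow> l1" using tendsto_fst[OF lim] unfolding l12 by (simp add: o_def)
  moreover have "(b \<circ> r) \<longlonglongrightarrow> l2" using tendsto_snd[OF lim] unfolding l12 by (simp add: o_def)
  moreover have "l1 \<in> X" "l2 \<in> X" using l unfolding l12 by auto
  ultimately show ?thesis using r by blast
qed

lemma sep_limit:
  fixes T :: "'a::metric_space \<Rightarrow> 'a" and a b :: "nat \<Rightarrow> 'a"
  assumes cT: "continuous_on X T" and TX: "T ` X \<subseteq> X"
    and ab: "\<And>j. a j \<in> X" "\<And>j. b j \<in> X" and a0: "a0 \<in> X" and b0: "b0 \<in> X"
    and la: "a \<longlonglongrightarrow> a0" and lb: "b \<longlonglongrightarrow> b0"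
    and ev: "\<And>n. eventually (\<lambda>j. dist ((T^^n) (a j)) ((T^^n) (b j)) \<ge> d) sequentially"
  shows "dist ((T^^n) a0) ((T^^n) b0) \<ge> d"
proof -
  have c: "continuous_on X (T^^n)" by (rule cont_funpow[OF cT TX])
  have "((\<lambda>j. (T^^n) (a j)) \<longlongrightarrow> (T^^n) a0) sequentially"
    using continuous_on_tendsto_compose[OF c la a0] ab by (simp add: o_def)
  moreover have "((\<lambda>j. (T^^n) (b j)) \<longlongrightarrow> (T^^n) b0) sequentially"
    using continuous_on_tendsto_compose[OF c lb b0] ab by (simp add: o_def)
  ultimately have "((\<lambda>j. dist ((T^^n) (a j)) ((T^^n) (b j))) \<longlongrightarrow> dist ((T^^n) a0) ((T^^n) b0)) sequentially"
    by (rule tendsto_dist)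
  then show ?thesis using ev[of n] by (rule tendsto_lowerbound) simp
qed


lemma funpow_comp_apply: "(T^^n) ((T^^k) x) = (T^^(n+k)) x"
  by (simp add: funpow_add)

lemma thick_pair:
  fixes T :: "'a::metric_space \<Rightarrow> 'a"
  assumes cX: "compact X" and cT: "continuous_on X T" and TX: "T ` X \<subseteq> X"
    and x: "x \<in> X" and y: "y \<in> X"
    and th: "thick {n. dist ((T^^n) x) ((T^^n) y) > d}"
  shows "\<exists>u\<in>X. \<exists>v\<in>X. (u, v) \<in> closure {((T^^n) x, (T^^n) y) | n. True} \<and>
           (\<forall>n. dist ((T^^n) u) ((T^^n) v) \<ge> d)"
proof -
  define A where "A = {n. dist ((T^^n) x) ((T^^n) y) > d}"
  have "\<forall>L. \<exists>m. {m..<m+L} \<subseteq> A" using th unfolding thick_def A_def .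
  then obtain m where m: "\<And>L. {m L..<m L + L} \<subseteq> A" by metis
  define a where "a = (\<lambda>j. (T^^(m j)) x)"
  define b where "b = (\<lambda>j. (T^^(m j)) y)"
  have aX: "a j \<in> X" for j unfolding a_def by (rule funpow_in[OF TX x])
  have bX: "b j \<in> X" for j unfolding b_def by (rule funpow_in[OF TX y])
  obtain u v r where u: "u \<in> X" and v: "v \<in> X" and r: "strict_mono r"
    and la: "(a \<circ> r) \<longlonglongrightarrow> u" and lb: "(b \<circ> r) \<longlonglongrightarrow> v"
    using seq_pair[of X a b, OF cX aX bX] by blast
  have sep: "dist ((T^^n) u) ((T^^n) v) \<ge> d" for n
  proof (rule sep_limit[OF cT TX _ _ u v la lb])
    show "(a \<circ> r) j \<in> X" "(b \<circ> r) j \<in> X" for j using aX bX by simp_all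
    fix n
    show "eventually (\<lambda>j. dist ((T^^n) ((a \<circ> r) j)) ((T^^n) ((b \<circ> r) j)) \<ge> d) sequentially"
      unfolding eventually_sequentially
    proof (intro exI allI impI)
      fix j assume j: "Suc n \<le> j"
      have "j \<le> r j" using r by (rule seq_suble)
      then have "m (r j) + n \<in> {m (r j)..<m (r j) + r j}" using j by simp
      then have "m (r j) + n \<in> A" using m by blast
      then have "dist ((T^^(n + m (r j))) x) ((T^^(n + m (r j))) y) > d"
        unfolding A_def by (simp add: add.commute)
      then show "dist ((T^^n) ((a \<circ> r) j)) ((T^^n) ((b \<circ> r) j)) \<ge> d"
        unfolding a_def b_def comp_apply funpow_comp_apply by simp
    qed
  qed
  have "(u, v) \<in> closure {((T^^n) x, (T^^n) y) | n. True}"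
    unfolding closure_sequential
  proof (intro exI conjI allI)
    show "(\<lambda>j. ((a \<circ> r) j, (b \<circ> r) j)) \<longlonglongrightarrow> (u, v)" using la lb by (rule tendsto_Pair)
    fix j show "((a \<circ> r) j, (b \<circ> r) j) \<in> {((T^^n) x, (T^^n) y) | n. True}"
      unfolding a_def b_def comp_apply by blast
  qed
  then show ?thesis using u v sep by blast
qed


lemma factor_comm_pow:
  assumes TX: "T ` X \<subseteq> X" and comm: "\<forall>x\<in>X. p (T x) = S (p x)" and x: "x \<in> X"
  shows "p ((T^^n) x) = (S^^n) (p x)"
proof (induction n)
  case 0 then show ?case by simp
next
  case (Suc n)
  have "(T^^n) x \<in> X" by (rule funpow_in[OF TX x])
  then show ?case using comm Suc by simp
qed

lemma pullback:
  fixes X :: "'a::metric_space set" and Y :: "'b::metric_space set"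
  assumes fm: "factor_map X T Y S p" and dY: "distal Y S"
    and x: "x \<in> X" and y: "y \<in> X" and u: "u \<in> X" and v: "v \<in> X"
    and uv: "(u, v) \<in> closure {((T^^n) x, (T^^n) y) | n. True}"
    and sep: "\<And>n. dist ((T^^n) u) ((T^^n) v) \<ge> d"
  shows "\<exists>x'\<in>X. \<exists>y'\<in>X. p x' = p x \<and> p y' = p y \<and> (\<forall>n. dist ((T^^n) x') ((T^^n) y') \<ge> d)"
proof -
  have tX: "tds X T" and tY: "tds Y S" and cp: "continuous_on X p" and pX: "p ` X = Y"
    and comm: "\<forall>x\<in>X. p (T x) = S (p x)"
    using fm unfolding factor_map_def by auto
  have cX: "compact X" and cT: "continuous_on X T" and TX: "T ` X \<subseteq> X"
    using tX unfolding tds_def by auto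
  have cY: "compact Y" and cS: "continuous_on Y S" and SY: "S ` Y \<subseteq> Y"
    using tY unfolding tds_def by auto
  have pxY: "p x \<in> Y" and pyY: "p y \<in> Y" and puY: "p u \<in> Y" and pvY: "p v \<in> Y"
    using pX x y u v by auto
  interpret env Y S "p x" using cY pxY cS SY by (unfold_locales)
  have step1: "(p u, p v) \<in> closure {((S^^n) (p x), (S^^n) (p y)) | n. True}"
  proof -
    obtain w where w: "\<And>j. w j \<in> {((T^^n) x, (T^^n) y) | n. True}" and lw: "w \<longlonglongrightarrow> (u, v)"
      using uv unfolding closure_sequential by blast
    have wX: "fst (w j) \<in> X" "snd (w j) \<in> X" for j
      using w[of j] funpow_in[OF TX x] funpow_in[OF TX y] by auto
    have l1: "(\<lambda>j. p (fst (w j))) \<longlonglongrightarrow> p u"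
      using continuous_on_tendsto_compose[OF cp tendsto_fst[OF lw]] u wX by (simp add: o_def)
    have l2: "(\<lambda>j. p (snd (w j))) \<longlonglongrightarrow> p v"
      using continuous_on_tendsto_compose[OF cp tendsto_snd[OF lw]] v wX by (simp add: o_def)
    have lim1: "(\<lambda>j. (p (fst (w j)), p (snd (w j)))) \<longlonglongrightarrow> (p u, p v)" using l1 l2 by (rule tendsto_Pair)
    have mem1: "(p (fst (w j)), p (snd (w j))) \<in> {((S^^n) (p x), (S^^n) (p y)) | n. True}" for j
    proof -
      obtain n where "w j = ((T^^n) x, (T^^n) y)" using w[of j] by blast
      then have "(p (fst (w j)), p (snd (w j))) = ((S^^n) (p x), (S^^n) (p y))"
        using factor_comm_pow[OF TX comm x] factor_comm_pow[OF TX comm y] by simp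
      then show ?thesis by blast
    qed
    show ?thesis unfolding closure_sequential
    proof (intro exI conjI allI)
      show "(\<lambda>j. (p (fst (w j)), p (snd (w j)))) \<longlonglongrightarrow> (p u, p v)" by (rule lim1)
      fix j show "(p (fst (w j)), p (snd (w j))) \<in> {((S^^n) (p x), (S^^n) (p y)) | n. True}"
        by (rule mem1)
    qed
  qed
  have "(p x, p y) \<in> closure {((S^^n) (p u), (S^^n) (p v)) | n. True}"
    by (rule semisimple_pairs[OF dY pxY pyY step1])
  then obtain g where g: "\<And>j. g j \<in> {((S^^n) (p u), (S^^n) (p v)) | n. True}"
    and lg: "g \<longlonglongrightarrow> (p x, p y)"
    unfolding closure_sequential by blast
  have "\<forall>j. \<exists>n. g j = ((S^^n) (p u), (S^^n) (p v))" using g by blast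
  then obtain nn where nn: "\<And>j. g j = ((S^^nn j) (p u), (S^^nn j) (p v))" by metis
  define a where "a = (\<lambda>j. (T^^(nn j)) u)"
  define b where "b = (\<lambda>j. (T^^(nn j)) v)"
  have aX: "a j \<in> X" for j unfolding a_def by (rule funpow_in[OF TX u])
  have bX: "b j \<in> X" for j unfolding b_def by (rule funpow_in[OF TX v])
  obtain x' y' r where x': "x' \<in> X" and y': "y' \<in> X" and r: "strict_mono r"
    and la: "(a \<circ> r) \<longlonglongrightarrow> x'" and lb: "(b \<circ> r) \<longlonglongrightarrow> y'"
    using seq_pair[of X a b, OF cX aX bX] by blast
  have pa: "p (a j) = fst (g j)" for j
    unfolding a_def nn using factor_comm_pow[OF TX comm u] by simp
  have pb: "p (b j) = snd (g j)" for j
    unfolding b_def nn using factor_comm_pow[OF TX comm v] by simp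
  have lgr: "(g \<circ> r) \<longlonglongrightarrow> (p x, p y)" using lg r by (rule LIMSEQ_subseq_LIMSEQ)
  have "(\<lambda>j. p ((a \<circ> r) j)) \<longlonglongrightarrow> p x'"
    using continuous_on_tendsto_compose[OF cp la x'] aX by (simp add: o_def)
  moreover have "(\<lambda>j. p ((a \<circ> r) j)) \<longlonglongrightarrow> p x"
    using tendsto_fst[OF lgr] unfolding comp_apply pa by (simp add: o_def)
  ultimately have px': "p x' = p x" by (rule LIMSEQ_unique)
  have "(\<lambda>j. p ((b \<circ> r) j)) \<longlonglongrightarrow> p y'"
    using continuous_on_tendsto_compose[OF cp lb y'] bX by (simp add: o_def)
  moreover have "(\<lambda>j. p ((b \<circ> r) j)) \<longlonglongrightarrow> p y"
    using tendsto_snd[OF lgr] unfolding comp_apply pb by (simp add: o_def)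
  ultimately have py': "p y' = p y" by (rule LIMSEQ_unique)
  have sep': "dist ((T^^n) x') ((T^^n) y') \<ge> d" for n
  proof (rule sep_limit[OF cT TX _ _ x' y' la lb])
    show "(a \<circ> r) j \<in> X" "(b \<circ> r) j \<in> X" for j using aX bX by simp_all
    fix n
    show "eventually (\<lambda>j. dist ((T^^n) ((a \<circ> r) j)) ((T^^n) ((b \<circ> r) j)) \<ge> d) sequentially"
      unfolding a_def b_def comp_apply funpow_comp_apply using sep by simp
  qed
  show ?thesis using x' y' px' py' sep' by blast
qed




lemma lim_close:
  fixes f :: "nat \<Rightarrow> 'a::metric_space"
  assumes "\<And>k. dist (f k) z < 1 / (real k + 1)"
  shows "f \<longlonglongrightarrow> z"
  unfolding lim_sequentially
proof (intro allI impI)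
  fix e :: real assume e: "e > 0"
  obtain N where N: "inverse (real (Suc N)) < e" using reals_Archimedean[OF e] by blast
  show "\<exists>no. \<forall>n\<ge>no. dist (f n) z < e"
  proof (intro exI allI impI)
    fix n assume n: "N \<le> n"
    have "1 / (real n + 1) \<le> 1 / (real N + 1)"
      using n by (intro divide_left_mono) auto
    also have "\<dots> = inverse (real (Suc N))" by (simp add: divide_inverse add.commute)
    finally show "dist (f n) z < e" using assms[of n] N by linarith
  qed
qed

theorem proposition5p2:
  fixes X :: "'a::metric_space set" and T :: "'a \<Rightarrow> 'a"
    and Y :: "'b::metric_space set" and S :: "'b \<Rightarrow> 'b" and p :: "'a \<Rightarrow> 'b"
  assumes "tds X T" and "minimal X T"
    and "max_distal_factor X T Y S p"
    and "proximal_factor X T p"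
  shows "\<not> strongly_Ft_sensitive X T"
proof
  assume "strongly_Ft_sensitive X T"
  then obtain d :: real where d: "d > 0" and H: "\<And>U. openin (top_of_set X) U \<Longrightarrow> U \<noteq> {} \<Longrightarrow>
     (\<exists>x\<in>U. \<exists>y\<in>U. thick {n. dist ((T ^^ n) x) ((T ^^ n) y) > d})"
    unfolding strongly_Ft_sensitive_def by blast
  have fm: "factor_map X T Y S p" and dY: "distal Y S"
    using assms(3) unfolding max_distal_factor_def by auto
  have cX: "compact X" and Xne: "X \<noteq> {}" and cT: "continuous_on X T" and TX: "T ` X \<subseteq> X"
    using assms(1) unfolding tds_def by auto
  have cp: "continuous_on X p" using fm unfolding factor_map_def by auto
  obtain z where z: "z \<in> X" using Xne by blast
  define Q where "Q = (\<lambda>(k::nat) a b a' b'. a \<in> X \<and> b \<in> X \<and> dist a z < 1 / (real k + 1) \<and>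
      dist b z < 1 / (real k + 1) \<and> a' \<in> X \<and> b' \<in> X \<and> p a' = p a \<and> p b' = p b \<and>
      (\<forall>n. d \<le> dist ((T^^n) a') ((T^^n) b')))"
  have ex: "\<exists>a b a' b'. Q k a b a' b'" for k
  proof -
    define U where "U = X \<inter> ball z (1 / (real k + 1))"
    have "openin (top_of_set X) U" unfolding U_def by (rule openin_open_Int) simp
    moreover have "U \<noteq> {}" unfolding U_def using z by auto
    ultimately obtain x y where xU: "x \<in> U" and yU: "y \<in> U"
      and th: "thick {n. dist ((T ^^ n) x) ((T ^^ n) y) > d}" using H by blast
    have x: "x \<in> X" and y: "y \<in> X" using xU yU unfolding U_def by auto
    obtain u v where u: "u \<in> X" and v: "v \<in> X"
      and uv: "(u, v) \<in> closure {((T^^n) x, (T^^n) y) | n. True}"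
      and sep: "\<forall>n. dist ((T^^n) u) ((T^^n) v) \<ge> d"
      using thick_pair[OF cX cT TX x y th] by blast
    obtain x' y' where x': "x' \<in> X" and y': "y' \<in> X" and "p x' = p x" "p y' = p y"
      and "\<forall>n. dist ((T^^n) x') ((T^^n) y') \<ge> d"
      using pullback[OF fm dY x y u v uv] sep by blast
    moreover have "dist x z < 1 / (real k + 1)" "dist y z < 1 / (real k + 1)"
      using xU yU unfolding U_def by (auto simp: dist_commute)
    ultimately have "Q k x y x' y'" unfolding Q_def using x y by blast
    then show ?thesis by blast
  qed
  then obtain A B A' B' where Q: "\<And>k. Q k (A k) (B k) (A' k) (B' k)" by metis
  have AX: "A k \<in> X" "B k \<in> X" "A' k \<in> X" "B' k \<in> X" for k using Q[of k] unfolding Q_def by auto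
  have Az: "A \<longlonglongrightarrow> z" by (rule lim_close) (use Q in \<open>simp add: Q_def\<close>)
  have Bz: "B \<longlonglongrightarrow> z" by (rule lim_close) (use Q in \<open>simp add: Q_def\<close>)
  obtain xs ys r where xs: "xs \<in> X" and ys: "ys \<in> X" and r: "strict_mono r"
    and la: "(A' \<circ> r) \<longlonglongrightarrow> xs" and lb: "(B' \<circ> r) \<longlonglongrightarrow> ys"
    using seq_pair[of X A' B', OF cX AX(3) AX(4)] by blast
  have pA: "p (A' k) = p (A k)" and pB: "p (B' k) = p (B k)" for k using Q[of k] unfolding Q_def by auto
  have "(\<lambda>j. p ((A' \<circ> r) j)) \<longlonglongrightarrow> p xs"
    using continuous_on_tendsto_compose[OF cp la xs] AX by (simp add: o_def)
  moreover have "(\<lambda>j. p ((A' \<circ> r) j)) \<longlonglongrightarrow> p z"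
  proof -
    have l: "(A \<circ> r) \<longlonglongrightarrow> z" using Az r by (rule LIMSEQ_subseq_LIMSEQ)
    have "(\<lambda>j. p ((A \<circ> r) j)) \<longlonglongrightarrow> p z"
      using continuous_on_tendsto_compose[OF cp l z] AX by (simp add: o_def)
    then show ?thesis unfolding comp_apply pA .
  qed
  ultimately have pxs: "p xs = p z" by (rule LIMSEQ_unique)
  have "(\<lambda>j. p ((B' \<circ> r) j)) \<longlonglongrightarrow> p ys"
    using continuous_on_tendsto_compose[OF cp lb ys] AX by (simp add: o_def)
  moreover have "(\<lambda>j. p ((B' \<circ> r) j)) \<longlonglongrightarrow> p z"
  proof -
    have l: "(B \<circ> r) \<longlonglongrightarrow> z" using Bz r by (rule LIMSEQ_subseq_LIMSEQ)
    have "(\<lambda>j. p ((B \<circ> r) j)) \<longlonglongrightarrow> p z"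
      using continuous_on_tendsto_compose[OF cp l z] AX by (simp add: o_def)
    then show ?thesis unfolding comp_apply pB .
  qed
  ultimately have pys: "p ys = p z" by (rule LIMSEQ_unique)
  have sep: "dist ((T^^n) xs) ((T^^n) ys) \<ge> d" for n
  proof (rule sep_limit[OF cT TX _ _ xs ys la lb])
    show "(A' \<circ> r) j \<in> X" "(B' \<circ> r) j \<in> X" for j using AX by simp_all
    fix n
    have "\<forall>n. d \<le> dist ((T^^n) (A' k)) ((T^^n) (B' k))" for k using Q[of k] unfolding Q_def by auto
    then show "eventually (\<lambda>j. dist ((T^^n) ((A' \<circ> r) j)) ((T^^n) ((B' \<circ> r) j)) \<ge> d) sequentially"
      by simp
  qed
  have "proximal_pair T xs ys"
    using assms(4) xs ys pxs pys unfolding proximal_factor_def by metis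
  then have inf0: "(INF n. dist ((T^^n) xs) ((T^^n) ys)) = 0" unfolding proximal_pair_def .
  have "(INF n. dist ((T^^n) xs) ((T^^n) ys)) \<ge> d" by (rule cINF_greatest) (auto intro: sep)
  then show False using inf0 d by linarith
qed


end
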